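(* Let $\Psi$ be the interaction on the CAR algebra $\mathcal A^{CAR}(\ell^2(\mathbb Z))$ defined by $\Psi(\{n,n+2l\})=-\frac{2i}{\pi}\,\frac{2l}{(2l)^2-1}\,(a^*_na_{n+2l}-a^*_{n+2l}a_n)$ for $n\in\mathbb Z$, $l\in\mathbb Z$, $l\ge1$, and $\Psi(X)=0$ for all other finite $X\subset\mathbb Z$. Then $\sum_{X\ni0}\Psi(X)$ converges in norm and $$\Big\|\sum_{X\ni0}\Psi(X)\Big\|\le 2\sqrt{1-\frac{4}{\pi^2}}.$$
   Context: $\mathcal A^{CAR}(\ell^2(\mathbb Z))$ is the CAR algebra generated by $a_n=a(e_n)$, $a_n^*=a^*(e_n)$, $n\in\mathbb Z$, where $\{e_n\}$ is the standard basis of $\ell^2(\mathbb Z)$, satisfying $\{a_n,a_m^*\}=\delta_{nm}I$, $\{a_n,a_m\}=0$. The sum $\sum_{X\ni 0}$ runs over all finite subsets $X\subset\mathbb Z$ containing $0$. *)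

theory Defs
  imports "HOL-Analysis.Analysis"
begin

text \<open>Concrete realisation of the CAR algebra over l2(Z) in its (faithful) Fock
  representation: the fermionic Fock space is l2 of the finite subsets of Z,
  vectors are functions int set => complex vanishing on infinite sets and
  square summable; the CAR algebra norm is the operator norm.\<close>

type_synonym fvec = "int set \<Rightarrow> complex"
type_synonym fop = "fvec \<Rightarrow> fvec"

definition fock :: "fvec set" where
  "fock = {\<psi>. (\<forall>X. infinite X \<longrightarrow> \<psi> X = 0) \<and>
                 (\<lambda>X. (cmod (\<psi> X))\<^sup>2) summable_on UNIV}"

definition fnorm :: "fvec \<Rightarrow> real" where
  "fnorm \<psi> = sqrt (\<Sum>\<^sub>\<infinity>X. (cmod (\<psi> X))\<^sup>2)"

definition jw_sign :: "int \<Rightarrow> int set \<Rightarrow> complex" where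
  "jw_sign n X = (-1) ^ card {m\<in>X. m < n}"

definition ann :: "int \<Rightarrow> fop" where
  "ann n \<psi> = (\<lambda>X. if finite X \<and> n \<notin> X then jw_sign n X * \<psi> (insert n X) else 0)"

definition cre :: "int \<Rightarrow> fop" where
  "cre n \<psi> = (\<lambda>X. if finite X \<and> n \<in> X then jw_sign n (X - {n}) * \<psi> (X - {n}) else 0)"

definition bounded_op :: "fop \<Rightarrow> bool" where
  "bounded_op T \<longleftrightarrow> (\<exists>C. \<forall>\<psi>\<in>fock. T \<psi> \<in> fock \<and> fnorm (T \<psi>) \<le> C * fnorm \<psi>)"

definition opnorm :: "fop \<Rightarrow> real" where
  "opnorm T = Sup {fnorm (T \<psi>) | \<psi>. \<psi> \<in> fock \<and> fnorm \<psi> \<le> 1}"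

definition coef :: "int \<Rightarrow> complex" where
  "coef d = - (2 * \<i> / complex_of_real pi) * (of_int d / ((of_int d)\<^sup>2 - 1))"

definition Psi :: "int set \<Rightarrow> fop" where
  "Psi X \<psi> = (if \<exists>n l. l \<ge> 1 \<and> X = {n, n + 2 * l}
     then (let n = Min X; m = Max X in
           (\<lambda>Y. coef (m - n) * (cre n (ann m \<psi>) Y - cre m (ann n \<psi>) Y)))
     else (\<lambda>Y. 0))"

end

theory Submission
  imports Defs
begin


lemma jw_sq: "jw_sign n X * jw_sign n X = 1"
  unfolding jw_sign_def by (simp flip: power_add) 

lemma jw_cnj[simp]: "cnj (jw_sign n X) = jw_sign n X"
  unfolding jw_sign_def by simp

lemma jw_insert:
  assumes "finite Z" "k \<notin> Z"
  shows "jw_sign j (insert k Z) = (if k < j then -1 else 1) * jw_sign j Z"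
proof -
  have "{m\<in>insert k Z. m < j} = (if k < j then insert k {m\<in>Z. m<j} else {m\<in>Z. m<j})" by auto
  then show ?thesis using assms unfolding jw_sign_def by auto
qed

definition AO :: "int set \<Rightarrow> (int \<Rightarrow> complex) \<Rightarrow> fvec \<Rightarrow> fvec" where
  "AO V h \<phi> Z = (\<Sum>k\<in>V. if k \<notin> Z then h k * jw_sign k Z * \<phi> (insert k Z) else 0)"

definition CO :: "int set \<Rightarrow> (int \<Rightarrow> complex) \<Rightarrow> fvec \<Rightarrow> fvec" where
  "CO V g \<phi> Z = (\<Sum>k\<in>V. if k \<in> Z then g k * jw_sign k (Z - {k}) * \<phi> (Z - {k}) else 0)"

lemma sq_expand:
  fixes a :: "int \<Rightarrow> complex"
  assumes "finite V"
  shows "(\<Sum>k\<in>V. a k) * cnj (\<Sum>k\<in>V. a k) =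
     (\<Sum>k\<in>V. a k * cnj (a k)) + (\<Sum>k\<in>V. \<Sum>j\<in>V-{k}. a k * cnj (a j))"
proof -
  have "(\<Sum>k\<in>V. a k) * cnj (\<Sum>k\<in>V. a k) = (\<Sum>k\<in>V. \<Sum>j\<in>V. a k * cnj (a j))"
    by (simp add: sum_product)
  also have "\<dots> = (\<Sum>k\<in>V. a k * cnj (a k) + (\<Sum>j\<in>V-{k}. a k * cnj (a j)))"
    by (rule sum.cong[OF refl]) (simp add: assms sum.remove)
  finally show ?thesis by (simp add: sum.distrib)
qed

lemma diag_count:
  fixes \<phi> :: fvec
  assumes "finite V" "k \<in> V"
  shows "(\<Sum>Z\<in>Pow V. if k \<notin> Z then \<phi> (insert k Z) * cnj (\<phi> (insert k Z)) else 0)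
       + (\<Sum>Q\<in>Pow V. if k \<in> Q then \<phi> (Q - {k}) * cnj (\<phi> (Q - {k})) else 0)
       = (\<Sum>Z\<in>Pow V. \<phi> Z * cnj (\<phi> Z))"
proof -
  define n where "n Y = \<phi> Y * cnj (\<phi> Y)" for Y
  have fin: "finite (Pow V)" using assms by simp
  have 1: "(\<Sum>Z\<in>Pow V. if k \<notin> Z then n (insert k Z) else 0) = (\<Sum>Z\<in>{Z\<in>Pow V. k \<notin> Z}. n (insert k Z))"
    using fin by (rule sum.inter_filter[symmetric])
  also have "\<dots> = (\<Sum>Y\<in>{Y\<in>Pow V. k \<in> Y}. n Y)"
    by (rule sum.reindex_bij_witness[where i="\<lambda>Y. Y - {k}" and j="insert k"]) (use assms in auto)
  finally have A: "(\<Sum>Z\<in>Pow V. if k \<notin> Z then n (insert k Z) else 0) = (\<Sum>Y\<in>{Y\<in>Pow V. k \<in> Y}. n Y)" .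
  have "(\<Sum>Q\<in>Pow V. if k \<in> Q then n (Q - {k}) else 0) = (\<Sum>Q\<in>{Q\<in>Pow V. k \<in> Q}. n (Q - {k}))"
    using fin by (rule sum.inter_filter[symmetric])
  also have "\<dots> = (\<Sum>Y\<in>{Y\<in>Pow V. k \<notin> Y}. n Y)"
    by (rule sum.reindex_bij_witness[where i="insert k" and j="\<lambda>Y. Y - {k}"]) (use assms in auto)
  finally have B: "(\<Sum>Q\<in>Pow V. if k \<in> Q then n (Q - {k}) else 0) = (\<Sum>Y\<in>{Y\<in>Pow V. k \<notin> Y}. n Y)" .
  have C: "(\<Sum>Y\<in>Pow V. n Y) = (\<Sum>Y\<in>{Y\<in>Pow V. k \<in> Y}. n Y) + (\<Sum>Y\<in>{Y\<in>Pow V. k \<notin> Y}. n Y)"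
    using fin by (subst sum.union_disjoint[symmetric]) (auto intro!: sum.cong)
  show ?thesis using A B C unfolding n_def by simp
qed

lemma sign_swap:
  assumes "finite Z" "k \<notin> Z" "j \<notin> Z" "k \<noteq> j"
  shows "jw_sign j (insert k Z) * jw_sign k (insert j Z) = - (jw_sign j Z * jw_sign k Z)"
  using assms by (auto simp: jw_insert)

lemma car_identity:
  fixes h :: "int \<Rightarrow> complex" and \<phi> :: fvec
  assumes fV: "finite V"
  shows "(\<Sum>Z\<in>Pow V. AO V h \<phi> Z * cnj (AO V h \<phi> Z)) + (\<Sum>Z\<in>Pow V. CO V (\<lambda>k. cnj (h k)) \<phi> Z * cnj (CO V (\<lambda>k. cnj (h k)) \<phi> Z))
     = (\<Sum>k\<in>V. h k * cnj (h k)) * (\<Sum>Z\<in>Pow V. \<phi> Z * cnj (\<phi> Z))"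
proof -
  define a where "a Z k = (if k \<notin> Z then h k * jw_sign k Z * \<phi> (insert k Z) else 0)" for Z k
  define c where "c Q k = (if k \<in> Q then cnj (h k) * jw_sign k (Q - {k}) * \<phi> (Q - {k}) else 0)" for Q k
  have AOa: "AO V h \<phi> Z = (\<Sum>k\<in>V. a Z k)" for Z unfolding AO_def a_def by simp
  have COc: "CO V (\<lambda>k. cnj (h k)) \<phi> Z = (\<Sum>k\<in>V. c Z k)" for Z unfolding CO_def c_def by simp
  define D1 where "D1 = (\<Sum>Z\<in>Pow V. \<Sum>k\<in>V. a Z k * cnj (a Z k))"
  define D2 where "D2 = (\<Sum>Z\<in>Pow V. \<Sum>k\<in>V. c Z k * cnj (c Z k))"
  define O1 where "O1 = (\<Sum>Z\<in>Pow V. \<Sum>k\<in>V. \<Sum>j\<in>V-{k}. a Z k * cnj (a Z j))"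
  define O2 where "O2 = (\<Sum>Z\<in>Pow V. \<Sum>k\<in>V. \<Sum>j\<in>V-{k}. c Z k * cnj (c Z j))"
  have L: "?thesis \<longleftrightarrow> D1 + O1 + (D2 + O2) = (\<Sum>k\<in>V. h k * cnj (h k)) * (\<Sum>Z\<in>Pow V. \<phi> Z * cnj (\<phi> Z))"
  proof -
    have e1: "AO V h \<phi> Z * cnj (AO V h \<phi> Z) = (\<Sum>k\<in>V. a Z k * cnj (a Z k)) + (\<Sum>k\<in>V. \<Sum>j\<in>V-{k}. a Z k * cnj (a Z j))" for Z
      unfolding AOa by (rule sq_expand[OF fV])
    have e2: "CO V (\<lambda>k. cnj (h k)) \<phi> Z * cnj (CO V (\<lambda>k. cnj (h k)) \<phi> Z) = (\<Sum>k\<in>V. c Z k * cnj (c Z k)) + (\<Sum>k\<in>V. \<Sum>j\<in>V-{k}. c Z k * cnj (c Z j))" for Z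
      unfolding COc by (rule sq_expand[OF fV])
    show ?thesis unfolding D1_def D2_def O1_def O2_def by (simp only: e1 e2 sum.distrib add_ac)
  qed
  have D: "D1 + D2 = (\<Sum>k\<in>V. h k * cnj (h k)) * (\<Sum>Z\<in>Pow V. \<phi> Z * cnj (\<phi> Z))"
  proof -
    have d1: "a Z k * cnj (a Z k) = h k * cnj (h k) * (if k \<notin> Z then \<phi> (insert k Z) * cnj (\<phi> (insert k Z)) else 0)" for Z k
    proof -
      have "jw_sign k Z * jw_sign k Z = 1" by (rule jw_sq)
      then show ?thesis unfolding a_def by (auto simp: algebra_simps)
    qed
    have d2: "c Z k * cnj (c Z k) = h k * cnj (h k) * (if k \<in> Z then \<phi> (Z - {k}) * cnj (\<phi> (Z - {k})) else 0)" for Z k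
    proof -
      have "jw_sign k (Z-{k}) * jw_sign k (Z-{k}) = 1" by (rule jw_sq)
      then show ?thesis unfolding c_def by (auto simp: algebra_simps)
    qed
    have "D1 + D2 = (\<Sum>k\<in>V. \<Sum>Z\<in>Pow V. a Z k * cnj (a Z k) + c Z k * cnj (c Z k))"
      unfolding D1_def D2_def by (simp add: sum.distrib sum.swap[of _ V])
    also have "\<dots> = (\<Sum>k\<in>V. h k * cnj (h k) * ((\<Sum>Z\<in>Pow V. if k \<notin> Z then \<phi> (insert k Z) * cnj (\<phi> (insert k Z)) else 0)
       + (\<Sum>Q\<in>Pow V. if k \<in> Q then \<phi> (Q - {k}) * cnj (\<phi> (Q - {k})) else 0)))"
      by (simp add: d1 d2 sum.distrib sum_distrib_left distrib_left)
    also have "\<dots> = (\<Sum>k\<in>V. h k * cnj (h k) * (\<Sum>Z\<in>Pow V. \<phi> Z * cnj (\<phi> Z)))"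
      by (rule sum.cong[OF refl]) (simp add: diag_count fV)
    finally show ?thesis by (simp add: sum_distrib_right)
  qed
  define SV where "SV = Sigma V (\<lambda>k. V - {k})"
  have fSV: "finite SV" unfolding SV_def using fV by auto
  have O1s: "O1 = (\<Sum>(Z,k,j)\<in>Pow V \<times> SV. a Z k * cnj (a Z j))"
    unfolding O1_def SV_def using fV
    by (simp add: sum.Sigma sum.cartesian_product split_def)
  have O2s: "O2 = (\<Sum>(Z,k,j)\<in>Pow V \<times> SV. c Z k * cnj (c Z j))"
    unfolding O2_def SV_def using fV
    by (simp add: sum.Sigma sum.cartesian_product split_def)
  define S1 where "S1 = {(Z,k,j)\<in>Pow V \<times> SV. k \<notin> Z \<and> j \<notin> Z}"
  define S2 where "S2 = {(Z,k,j)\<in>Pow V \<times> SV. k \<in> Z \<and> j \<in> Z}"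
  have O1r: "O1 = (\<Sum>(Z,k,j)\<in>S1. a Z k * cnj (a Z j))"
    unfolding O1s S1_def
    by (rule sum.mono_neutral_right) (use fV fSV in \<open>auto simp: a_def\<close>)
  have O2r: "O2 = (\<Sum>(Z,k,j)\<in>S2. c Z k * cnj (c Z j))"
    unfolding O2s S2_def
    by (rule sum.mono_neutral_right) (use fV fSV in \<open>auto simp: c_def split: if_splits\<close>)
  have O: "O1 = - O2"
  proof -
    have "O1 = (\<Sum>x\<in>S2. - (case x of (Z,k,j) \<Rightarrow> c Z k * cnj (c Z j)))"
      unfolding O1r
    proof (rule sum.reindex_bij_witness[where i="\<lambda>(Q,k,j). (Q - {k,j}, j, k)" and j="\<lambda>(Z,k,j). (insert k (insert j Z), j, k)"])
      fix x assume x: "x \<in> S1"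
      obtain Z k j where xe: "x = (Z,k,j)" by (cases x) auto
      have Z: "Z \<subseteq> V" "k \<in> V" "j \<in> V" "k \<noteq> j" "k \<notin> Z" "j \<notin> Z"
        using x unfolding xe S1_def SV_def by auto
      have fZ: "finite Z" using Z fV finite_subset by blast
      show "(case (case x of (Z,k,j) \<Rightarrow> (insert k (insert j Z), j, k)) of (Q,k,j) \<Rightarrow> (Q - {k,j}, j, k)) = x"
        using Z unfolding xe by auto
      show "(case x of (Z,k,j) \<Rightarrow> (insert k (insert j Z), j, k)) \<in> S2"
        using Z unfolding xe S2_def SV_def by auto
      have e1: "insert k (insert j Z) - {j} = insert k Z" using Z by auto
      have e2: "insert k (insert j Z) - {k} = insert j Z" using Z by auto
      have sw: "jw_sign j (insert k Z) * jw_sign k (insert j Z) = - (jw_sign j Z * jw_sign k Z)"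
        by (rule sign_swap) (use Z fZ in auto)
      show "- (case (case x of (Z,k,j) \<Rightarrow> (insert k (insert j Z), j, k)) of (Z,k,j) \<Rightarrow> c Z k * cnj (c Z j))
            = (case x of (Z,k,j) \<Rightarrow> a Z k * cnj (a Z j))"
      proof -
        have "c (insert k (insert j Z)) j * cnj (c (insert k (insert j Z)) k)
            = cnj (h j) * h k * \<phi> (insert k Z) * cnj (\<phi> (insert j Z)) * (jw_sign j (insert k Z) * jw_sign k (insert j Z))"
          unfolding c_def e1 e2 by (simp add: algebra_simps)
        also have "\<dots> = - (a Z k * cnj (a Z j))"
          unfolding sw a_def using Z by (simp add: algebra_simps)
        finally show ?thesis unfolding xe by simp
      qed
    next
      fix y assume y: "y \<in> S2"
      obtain Q k j where ye: "y = (Q,k,j)" by (cases y) auto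
      have Q: "Q \<subseteq> V" "k \<in> V" "j \<in> V" "k \<noteq> j" "k \<in> Q" "j \<in> Q"
        using y unfolding ye S2_def SV_def by auto
      show "(case (case y of (Q,k,j) \<Rightarrow> (Q - {k,j}, j, k)) of (Z,k,j) \<Rightarrow> (insert k (insert j Z), j, k)) = y"
        using Q unfolding ye by auto
      show "(case y of (Q,k,j) \<Rightarrow> (Q - {k,j}, j, k)) \<in> S1"
        using Q unfolding ye S1_def SV_def by auto
    qed
    also have "\<dots> = - O2" unfolding O2r by (simp add: sum_negf)
    finally show ?thesis .
  qed
  show ?thesis unfolding L using D O by (simp add: algebra_simps)
qed



lemma jw_norm[simp]: "cmod (jw_sign n X) = 1"
  unfolding jw_sign_def by (simp add: norm_power)

lemma AO_bound:
  assumes "finite V"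
  shows "(\<Sum>Z\<in>Pow V. (cmod (AO V h \<phi> Z))\<^sup>2) \<le> (\<Sum>k\<in>V. (cmod (h k))\<^sup>2) * (\<Sum>Z\<in>Pow V. (cmod (\<phi> Z))\<^sup>2)"
proof -
  have "complex_of_real ((\<Sum>Z\<in>Pow V. (cmod (AO V h \<phi> Z))\<^sup>2) + (\<Sum>Z\<in>Pow V. (cmod (CO V (\<lambda>k. cnj (h k)) \<phi> Z))\<^sup>2))
     = complex_of_real ((\<Sum>k\<in>V. (cmod (h k))\<^sup>2) * (\<Sum>Z\<in>Pow V. (cmod (\<phi> Z))\<^sup>2))"
    using car_identity[OF assms, of h \<phi>] unfolding of_real_add of_real_mult of_real_sum complex_norm_square .
  then have "(\<Sum>Z\<in>Pow V. (cmod (AO V h \<phi> Z))\<^sup>2) + (\<Sum>Z\<in>Pow V. (cmod (CO V (\<lambda>k. cnj (h k)) \<phi> Z))\<^sup>2)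
     = (\<Sum>k\<in>V. (cmod (h k))\<^sup>2) * (\<Sum>Z\<in>Pow V. (cmod (\<phi> Z))\<^sup>2)"
    using of_real_eq_iff by blast
  moreover have "0 \<le> (\<Sum>Z\<in>Pow V. (cmod (CO V (\<lambda>k. cnj (h k)) \<phi> Z))\<^sup>2)" by (simp add: sum_nonneg)
  ultimately show ?thesis by linarith
qed

lemma CO_bound:
  assumes "finite V"
  shows "(\<Sum>Z\<in>Pow V. (cmod (CO V g \<phi> Z))\<^sup>2) \<le> (\<Sum>k\<in>V. (cmod (g k))\<^sup>2) * (\<Sum>Z\<in>Pow V. (cmod (\<phi> Z))\<^sup>2)"
proof -
  define h where "h k = cnj (g k)" for k
  have g: "g = (\<lambda>k. cnj (h k))" unfolding h_def by simp
  have "complex_of_real ((\<Sum>Z\<in>Pow V. (cmod (AO V h \<phi> Z))\<^sup>2) + (\<Sum>Z\<in>Pow V. (cmod (CO V (\<lambda>k. cnj (h k)) \<phi> Z))\<^sup>2))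
     = complex_of_real ((\<Sum>k\<in>V. (cmod (h k))\<^sup>2) * (\<Sum>Z\<in>Pow V. (cmod (\<phi> Z))\<^sup>2))"
    using car_identity[OF assms, of h \<phi>] unfolding of_real_add of_real_mult of_real_sum complex_norm_square .
  then have "(\<Sum>Z\<in>Pow V. (cmod (AO V h \<phi> Z))\<^sup>2) + (\<Sum>Z\<in>Pow V. (cmod (CO V (\<lambda>k. cnj (h k)) \<phi> Z))\<^sup>2)
     = (\<Sum>k\<in>V. (cmod (h k))\<^sup>2) * (\<Sum>Z\<in>Pow V. (cmod (\<phi> Z))\<^sup>2)"
    using of_real_eq_iff by blast
  moreover have "0 \<le> (\<Sum>Z\<in>Pow V. (cmod (AO V h \<phi> Z))\<^sup>2)" by (simp add: sum_nonneg)
  ultimately show ?thesis unfolding g by (simp add: h_def)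
qed



definition dd :: "int \<Rightarrow> complex" where
  "dd k = (if even k then coef k else 0)"

definition trm :: "fvec \<Rightarrow> int set \<Rightarrow> int \<Rightarrow> complex" where
  "trm \<psi> Y k = (if finite Y then
      (if 0 \<in> Y \<and> k \<notin> Y then dd k * jw_sign 0 (Y - {0}) * jw_sign k (Y - {0}) * \<psi> (insert k (Y - {0}))
       else if 0 \<notin> Y \<and> k \<in> Y then - (dd k * jw_sign k (Y - {k}) * jw_sign 0 (Y - {k}) * \<psi> (insert 0 (Y - {k})))
       else 0) else 0)"

lemma trm_0[simp]: "trm \<psi> Y 0 = 0"
  unfolding trm_def by auto

lemma a2: fixes V :: "int set" assumes "0 \<notin> V" shows "inj_on (insert 0) (Pow V)"
proof (rule inj_onI)
  fix A B assume "A \<in> Pow V" "B \<in> Pow V" "insert 0 A = insert 0 B"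
  then have "insert 0 A - {0} = insert 0 B - {0}" "0 \<notin> A" "0 \<notin> B" using assms by auto
  then show "A = B" by simp
qed
lemma a4:  fixes f :: "int set \<Rightarrow> 'b::comm_monoid_add" and V :: "int set"
  assumes "finite V" "0 \<notin> V" "inj_on (insert 0) (Pow V)" "Pow V \<inter> insert 0 ` Pow V = {}"
  shows "(\<Sum>Y\<in>Pow V \<union> insert 0 ` Pow V. f Y) = (\<Sum>Z\<in>Pow V. f Z) + (\<Sum>Z\<in>Pow V. f (insert 0 Z))"
proof -
  have "(\<Sum>Y\<in>Pow V \<union> insert 0 ` Pow V. f Y) = sum f (Pow V) + sum f (insert 0 ` Pow V)"
    by (rule sum.union_disjoint) (use assms in auto)
  also have "sum f (insert 0 ` Pow V) = sum (f \<circ> insert 0) (Pow V)" by (rule sum.reindex[OF assms(3)])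
  finally show ?thesis by simp
qed

lemma Pow_split_sum:
  fixes f :: "int set \<Rightarrow> 'b::comm_monoid_add"
  assumes "finite U" "0 \<in> U"
  shows "(\<Sum>Y\<in>Pow U. f Y) = (\<Sum>Z\<in>Pow (U - {0}). f Z) + (\<Sum>Z\<in>Pow (U - {0}). f (insert 0 Z))"
proof -
  define V where "V = U - {0}"
  have U1: "U = insert 0 V" using assms unfolding V_def by auto
  have U2: "0 \<notin> V" unfolding V_def by auto
  have fV: "finite V" using assms unfolding V_def by auto
  have "Pow U = Pow V \<union> insert 0 ` Pow V" unfolding U1 by (rule Pow_insert)
  moreover have "Pow V \<inter> insert 0 ` Pow V = {}" using U2 by auto
  ultimately show ?thesis unfolding V_def[symmetric] using a4[OF fV U2 a2[OF U2]] by simp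
qed


lemma finite_term_bound:
  assumes fU: "finite U" and U0: "0 \<in> U" and KU: "K \<subseteq> U - {0}"
  shows "(\<Sum>Y\<in>Pow U. (cmod (\<Sum>k\<in>K. trm \<psi> Y k))\<^sup>2) \<le> (\<Sum>k\<in>K. (cmod (dd k))\<^sup>2) * (\<Sum>Y\<in>Pow U. (cmod (\<psi> Y))\<^sup>2)"
proof -
  define V where "V = U - {0}"
  have fV: "finite V" using fU unfolding V_def by auto
  have KV: "K \<subseteq> V" using KU unfolding V_def .
  have fK: "finite K" using KV fV finite_subset by blast
  have V0: "0 \<notin> V" unfolding V_def by auto
  define h where "h k = (if k \<in> K then dd k else 0)" for k
  define \<psi>1 where "\<psi>1 W = jw_sign 0 W * \<psi> (insert 0 W)" for W
  have H: "(\<Sum>k\<in>V. (cmod (h k))\<^sup>2) = (\<Sum>k\<in>K. (cmod (dd k))\<^sup>2)"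
  proof -
    have "(\<Sum>k\<in>V. (cmod (h k))\<^sup>2) = (\<Sum>k\<in>K. (cmod (h k))\<^sup>2)"
      by (rule sum.mono_neutral_right) (use fV KV in \<open>auto simp: h_def\<close>)
    also have "\<dots> = (\<Sum>k\<in>K. (cmod (dd k))\<^sup>2)" by (rule sum.cong) (auto simp: h_def)
    finally show ?thesis .
  qed
  have T1: "(\<Sum>k\<in>K. trm \<psi> (insert 0 Z) k) = jw_sign 0 Z * AO V h \<psi> Z" if Z: "Z \<in> Pow V" for Z
  proof -
    have fZ: "finite Z" using Z fV finite_subset by auto
    have Z0: "0 \<notin> Z" using Z V0 by auto
    have "(\<Sum>k\<in>K. trm \<psi> (insert 0 Z) k) = (\<Sum>k\<in>V. jw_sign 0 Z * (if k \<notin> Z then h k * jw_sign k Z * \<psi> (insert k Z) else 0))"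
    proof (rule sum.mono_neutral_cong_left)
      show "finite V" by fact
      show "K \<subseteq> V" by fact
      show "\<forall>i\<in>V - K. jw_sign 0 Z * (if i \<notin> Z then h i * jw_sign i Z * \<psi> (insert i Z) else 0) = 0"
        unfolding h_def by auto
      show "\<And>x. x \<in> K \<Longrightarrow> trm \<psi> (insert 0 Z) x = jw_sign 0 Z * (if x \<notin> Z then h x * jw_sign x Z * \<psi> (insert x Z) else 0)"
      proof -
        fix x assume x: "x \<in> K"
        then have "x \<noteq> 0" using KV V0 by auto
        moreover have "insert 0 Z - {0} = Z" using Z0 by auto
        ultimately show "trm \<psi> (insert 0 Z) x = jw_sign 0 Z * (if x \<notin> Z then h x * jw_sign x Z * \<psi> (insert x Z) else 0)"
        proof -
          have "trm \<psi> (insert 0 Z) x = (if x \<notin> Z then dd x * jw_sign 0 Z * jw_sign x Z * \<psi> (insert x Z) else 0)"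
            unfolding trm_def using fZ \<open>x \<noteq> 0\<close> \<open>insert 0 Z - {0} = Z\<close> by simp
          then show ?thesis using x unfolding h_def by (simp add: mult_ac)
        qed
      qed
    qed
    then show ?thesis unfolding AO_def by (simp add: sum_distrib_left)
  qed
  have T2: "(\<Sum>k\<in>K. trm \<psi> Z k) = - CO V h \<psi>1 Z" if Z: "Z \<in> Pow V" for Z
  proof -
    have fZ: "finite Z" using Z fV finite_subset by auto
    have Z0: "0 \<notin> Z" using Z V0 by auto
    have "(\<Sum>k\<in>K. trm \<psi> Z k) = (\<Sum>k\<in>V. - (if k \<in> Z then h k * jw_sign k (Z - {k}) * \<psi>1 (Z - {k}) else 0))"
    proof (rule sum.mono_neutral_cong_left)
      show "finite V" by fact
      show "K \<subseteq> V" by fact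
      show "\<forall>i\<in>V - K. - (if i \<in> Z then h i * jw_sign i (Z - {i}) * \<psi>1 (Z - {i}) else 0) = 0"
        unfolding h_def by auto
      show "\<And>x. x \<in> K \<Longrightarrow> trm \<psi> Z x = - (if x \<in> Z then h x * jw_sign x (Z - {x}) * \<psi>1 (Z - {x}) else 0)"
      proof -
        fix x assume x: "x \<in> K"
        then have x0: "x \<noteq> 0" using KV V0 by auto
        have "trm \<psi> Z x = (if x \<in> Z then - (dd x * jw_sign x (Z - {x}) * jw_sign 0 (Z - {x}) * \<psi> (insert 0 (Z - {x}))) else 0)"
          unfolding trm_def using fZ Z0 by simp
        then show "trm \<psi> Z x = - (if x \<in> Z then h x * jw_sign x (Z - {x}) * \<psi>1 (Z - {x}) else 0)"
          using x unfolding h_def \<psi>1_def by (simp add: mult_ac)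
      qed
    qed
    then show ?thesis unfolding CO_def by (simp add: sum_negf)
  qed
  have "(\<Sum>Y\<in>Pow U. (cmod (\<Sum>k\<in>K. trm \<psi> Y k))\<^sup>2)
      = (\<Sum>Z\<in>Pow V. (cmod (\<Sum>k\<in>K. trm \<psi> Z k))\<^sup>2) + (\<Sum>Z\<in>Pow V. (cmod (\<Sum>k\<in>K. trm \<psi> (insert 0 Z) k))\<^sup>2)"
    unfolding V_def by (rule Pow_split_sum[OF fU U0])
  also have "\<dots> = (\<Sum>Z\<in>Pow V. (cmod (CO V h \<psi>1 Z))\<^sup>2) + (\<Sum>Z\<in>Pow V. (cmod (AO V h \<psi> Z))\<^sup>2)"
  proof -
    have "(\<Sum>Z\<in>Pow V. (cmod (\<Sum>k\<in>K. trm \<psi> Z k))\<^sup>2) = (\<Sum>Z\<in>Pow V. (cmod (CO V h \<psi>1 Z))\<^sup>2)"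
      by (rule sum.cong[OF refl]) (simp only: T2 norm_minus_cancel)
    moreover have "(\<Sum>Z\<in>Pow V. (cmod (\<Sum>k\<in>K. trm \<psi> (insert 0 Z) k))\<^sup>2) = (\<Sum>Z\<in>Pow V. (cmod (AO V h \<psi> Z))\<^sup>2)"
      by (rule sum.cong[OF refl]) (simp only: T1 norm_mult jw_norm mult_1)
    ultimately show ?thesis by simp
  qed
  also have "\<dots> \<le> (\<Sum>k\<in>V. (cmod (h k))\<^sup>2) * (\<Sum>Z\<in>Pow V. (cmod (\<psi>1 Z))\<^sup>2) + (\<Sum>k\<in>V. (cmod (h k))\<^sup>2) * (\<Sum>Z\<in>Pow V. (cmod (\<psi> Z))\<^sup>2)"
    by (intro add_mono CO_bound AO_bound fV)
  also have "\<dots> = (\<Sum>k\<in>K. (cmod (dd k))\<^sup>2) * ((\<Sum>Z\<in>Pow V. (cmod (\<psi> Z))\<^sup>2) + (\<Sum>Z\<in>Pow V. (cmod (\<psi> (insert 0 Z)))\<^sup>2))"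
  proof -
    have "(\<Sum>Z\<in>Pow V. (cmod (\<psi>1 Z))\<^sup>2) = (\<Sum>Z\<in>Pow V. (cmod (\<psi> (insert 0 Z)))\<^sup>2)"
      by (rule sum.cong[OF refl]) (simp only: \<psi>1_def norm_mult jw_norm mult_1)
    then show ?thesis unfolding H by (simp only: distrib_left add.commute)
  qed
  also have "\<dots> = (\<Sum>k\<in>K. (cmod (dd k))\<^sup>2) * (\<Sum>Y\<in>Pow U. (cmod (\<psi> Y))\<^sup>2)"
    unfolding V_def by (simp only: Pow_split_sum[OF fU U0])
  finally show ?thesis .
qed



definition bb :: "int \<Rightarrow> real" where
  "bb k = (if \<bar>k\<bar> \<ge> 2 then 1 / (real_of_int k)\<^sup>2 else 0)"

lemma pi9: "pi\<^sup>2 \<ge> 9"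
proof -
  have "3 * 3 \<le> pi * pi" using pi_gt3 by (intro mult_mono) auto
  then show ?thesis by (simp add: power2_eq_square)
qed

lemma bb_nonneg: "bb k \<ge> 0" unfolding bb_def by auto

lemma bb_interval: "(\<Sum>k\<in>{-int (Suc n)..int (Suc n)}. bb k) \<le> 2 - 2 / real (Suc n)"
proof (induction n)
  case 0
  have "{-int (Suc 0)..int (Suc 0)} = {-1,0,1}" by auto
  then show ?case by (simp add: bb_def)
next
  case (Suc n)
  have e: "{-int (Suc (Suc n))..int (Suc (Suc n))} = insert (-int (Suc (Suc n))) (insert (int (Suc (Suc n))) {-int (Suc n)..int (Suc n)})"
    by auto
  have b1: "bb (-int (Suc (Suc n))) = 1 / (real (Suc (Suc n)))\<^sup>2" unfolding bb_def by (simp add: power2_eq_square algebra_simps)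
  have b2: "bb (int (Suc (Suc n))) = 1 / (real (Suc (Suc n)))\<^sup>2" unfolding bb_def by simp
  have key: "1 / (real (Suc (Suc n)))\<^sup>2 \<le> 1 / real (Suc n) - 1 / real (Suc (Suc n))"
  proof -
    define a where "a = real (Suc n)"
    have c: "real (Suc (Suc n)) = a + 1" unfolding a_def by simp
    have a0: "a > 0" unfolding a_def by simp
    have "1 / a - 1 / (a + 1) = 1 / (a * (a + 1))" using a0 by (simp add: field_simps)
    moreover have "1 / (a + 1)\<^sup>2 \<le> 1 / (a * (a + 1))"
      unfolding power2_eq_square by (rule frac_le) (use a0 in auto)
    ultimately show ?thesis unfolding c a_def[symmetric] by linarith
  qed
  have "(\<Sum>k\<in>{-int (Suc (Suc n))..int (Suc (Suc n))}. bb k) = bb (-int (Suc (Suc n))) + bb (int (Suc (Suc n))) + (\<Sum>k\<in>{-int (Suc n)..int (Suc n)}. bb k)"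
    unfolding e by simp
  also have "\<dots> \<le> 2 - 2 / real (Suc (Suc n))"
    using Suc.IH key unfolding b1 b2 by linarith
  finally show ?case .
qed

lemma bb_finite: assumes "finite F" shows "sum bb F \<le> 2"
proof -
  define n where "n = nat (\<Sum>k\<in>F. \<bar>k\<bar>)"
  have "F \<subseteq> {-int (Suc n)..int (Suc n)}"
  proof
    fix k assume k: "k \<in> F"
    have "\<bar>k\<bar> \<le> (\<Sum>k\<in>F. \<bar>k\<bar>)" by (rule member_le_sum) (use assms k in auto)
    then show "k \<in> {-int (Suc n)..int (Suc n)}" unfolding n_def by auto
  qed
  then have "sum bb F \<le> (\<Sum>k\<in>{-int (Suc n)..int (Suc n)}. bb k)"
    by (intro sum_mono2) (auto simp: bb_nonneg)
  also have "\<dots> \<le> 2" using bb_interval[of n] by (smt (verit) divide_nonneg_nonneg of_nat_0_le_iff)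
  finally show ?thesis .
qed

lemma coef_real: "coef k = - (2 * \<i> / complex_of_real pi) * complex_of_real (real_of_int k / ((real_of_int k)\<^sup>2 - 1))"
  unfolding coef_def by simp

lemma cmod_coef_sq: "(cmod (coef k))\<^sup>2 = 4 / pi\<^sup>2 * ((real_of_int k)\<^sup>2 / ((real_of_int k)\<^sup>2 - 1)\<^sup>2)"
proof -
  have "cmod (2 * \<i> / complex_of_real pi) = 2 / pi" by (simp add: norm_divide norm_mult)
  then show ?thesis unfolding coef_real norm_mult norm_minus_cancel norm_of_real
    by (simp add: power_mult_distrib power_divide)
qed

lemma dd_bound: "(cmod (dd k))\<^sup>2 \<le> 64 / 81 * bb k"
proof (cases "even k \<and> k \<noteq> 0")
  case True
  then have k2: "\<bar>k\<bar> \<ge> 2" by (auto elim!: evenE)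
  define x where "x = (real_of_int k)\<^sup>2"
  have x4: "x \<ge> 4"
  proof -
    have "(2::real) * 2 \<le> real_of_int \<bar>k\<bar> * real_of_int \<bar>k\<bar>"
      using k2 by (intro mult_mono) auto
    then show ?thesis unfolding x_def by (simp add: power2_eq_square)
  qed
  have pi3: "pi\<^sup>2 \<ge> 9" by (rule pi9)
  have a: "4 / pi\<^sup>2 \<le> 4 / 9" using pi3 by (intro frac_le) auto
  have b: "x / (x - 1)\<^sup>2 \<le> 16 / 9 / x"
  proof -
    have h3: "3 * x \<le> 4 * (x - 1)" using x4 by (simp add: algebra_simps)
    have n: "(3 * x) * (3 * x) \<le> (4 * (x - 1)) * (4 * (x - 1))"
      by (rule mult_mono[OF h3 h3]) (use x4 in auto)
    have e: "x / (x - 1)\<^sup>2 - 16 / 9 / x = (9 * x * x - 16 * (x - 1)\<^sup>2) / (9 * x * (x - 1)\<^sup>2)"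
      using x4 by (simp add: field_simps)
    have "(9 * x * x - 16 * (x - 1)\<^sup>2) / (9 * x * (x - 1)\<^sup>2) \<le> 0"
    proof (rule divide_nonpos_nonneg)
      show "9 * x * x - 16 * (x - 1)\<^sup>2 \<le> 0" using n by (simp add: power2_eq_square algebra_simps)
      show "0 \<le> 9 * x * (x - 1)\<^sup>2" using x4 by simp
    qed
    then show ?thesis using e by linarith
  qed
  have "(cmod (dd k))\<^sup>2 = 4 / pi\<^sup>2 * (x / (x - 1)\<^sup>2)"
  proof -
    have "dd k = coef k" using True by (simp add: dd_def)
    then show ?thesis unfolding x_def by (simp only: cmod_coef_sq)
  qed
  also have "\<dots> \<le> 4 / 9 * (16 / 9 / x)"
    by (rule mult_mono[OF a b]) (use x4 in auto)
  also have "\<dots> = 64 / 81 * bb k" unfolding bb_def x_def using k2 by simp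
  finally show ?thesis .
next
  case False
  then have "dd k = 0" unfolding dd_def coef_def by auto
  then show ?thesis by (simp add: bb_nonneg)
qed

lemma dd_finite: "finite F \<Longrightarrow> (\<Sum>k\<in>F. (cmod (dd k))\<^sup>2) \<le> 128 / 81"
proof -
  assume "finite F"
  then have "(\<Sum>k\<in>F. (cmod (dd k))\<^sup>2) \<le> (\<Sum>k\<in>F. 64 / 81 * bb k)" by (intro sum_mono dd_bound)
  also have "\<dots> = 64/81 * sum bb F" by (simp add: sum_distrib_left)
  also have "\<dots> \<le> 64/81 * 2" using bb_finite[OF \<open>finite F\<close>] by simp
  finally show ?thesis by simp
qed

lemma dd_summable: "(\<lambda>k. (cmod (dd k))\<^sup>2) summable_on A"
proof -
  have "(\<lambda>k. (cmod (dd k))\<^sup>2) summable_on UNIV"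
    by (rule nonneg_bdd_above_summable_on) (auto intro!: bdd_aboveI[where M="128/81"] dd_finite)
  then show ?thesis by (rule summable_on_subset_banach) auto
qed

lemma dd_total: "(\<Sum>\<^sub>\<infinity>k. (cmod (dd k))\<^sup>2) \<le> 4 * (1 - 4 / pi\<^sup>2)"
proof -
  have "(\<Sum>\<^sub>\<infinity>k. (cmod (dd k))\<^sup>2) \<le> 128 / 81"
    by (rule infsum_le_finite_sums[OF dd_summable]) (rule dd_finite)
  moreover have "pi\<^sup>2 \<ge> 9" by (rule pi9)
  then have "16 / pi\<^sup>2 \<le> 16 / 9" by (intro frac_le) auto
  ultimately show ?thesis by (simp add: algebra_simps)
qed

lemma dd_0[simp]: "dd 0 = 0" unfolding dd_def coef_def by simp



lemma fock_sq: "\<psi> \<in> fock \<Longrightarrow> (\<lambda>X. (cmod (\<psi> X))\<^sup>2) summable_on A"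
  unfolding fock_def by (auto intro: summable_on_subset_banach)

lemma fock_inf: "\<psi> \<in> fock \<Longrightarrow> infinite X \<Longrightarrow> \<psi> X = 0"
  unfolding fock_def by auto

lemma fock_fin: "\<psi> \<in> fock \<Longrightarrow> finite W \<Longrightarrow> (\<Sum>Y\<in>W. (cmod (\<psi> Y))\<^sup>2) \<le> (\<Sum>\<^sub>\<infinity>X. (cmod (\<psi> X))\<^sup>2)"
  by (rule finite_sum_le_infsum) (auto intro: fock_sq)

lemma trm_inf: "infinite Y \<Longrightarrow> trm \<psi> Y k = 0" unfolding trm_def by simp

lemma trm_inf_fun: "infinite Y \<Longrightarrow> trm \<psi> Y = (\<lambda>_. 0)" by (rule ext) (simp add: trm_inf)

lemma trm_summable_UNIV:
  assumes psi: "\<psi> \<in> fock"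
  shows "trm \<psi> Y summable_on UNIV"
proof (cases "finite Y")
  case False
  then show ?thesis by (simp add: trm_inf_fun)
next
  case fin: True
  show ?thesis
  proof (cases "0 \<in> Y")
    case False
    have "trm \<psi> Y summable_on UNIV \<longleftrightarrow> trm \<psi> Y summable_on Y"
      by (rule summable_on_cong_neutral) (use False in \<open>auto simp: trm_def\<close>)
    then show ?thesis using fin by simp
  next
    case Y0: True
    define Z where "Z = Y - {0}"
    define F where "F X = (cmod (\<psi> X))\<^sup>2" for X
    have injZ: "inj_on (\<lambda>k. insert k Z) (- Y)"
    proof (rule inj_onI)
      fix k j assume "k \<in> - Y" "j \<in> - Y" "insert k Z = insert j Z"
      then show "k = j" unfolding Z_def by blast
    qed
    have "F summable_on ((\<lambda>k. insert k Z) ` (- Y))" unfolding F_def using psi by (rule fock_sq)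
    then have "(F \<circ> (\<lambda>k. insert k Z)) summable_on (- Y)" using summable_on_reindex[OF injZ] by blast
    then have s2: "(\<lambda>k. if k \<notin> Y then F (insert k Z) else 0) summable_on UNIV"
      by (subst summable_on_cong_neutral[where T="-Y" and g="F \<circ> (\<lambda>k. insert k Z)"]) auto
    have s: "(\<lambda>k. (cmod (dd k))\<^sup>2 + (if k \<notin> Y then F (insert k Z) else 0)) summable_on UNIV"
      by (intro summable_on_add dd_summable s2)
    have "(\<lambda>k. cmod (trm \<psi> Y k)) summable_on UNIV"
    proof (rule summable_on_comparison_test[OF s])
      fix k :: int
      show "0 \<le> cmod (trm \<psi> Y k)" by simp
      show "cmod (trm \<psi> Y k) \<le> (cmod (dd k))\<^sup>2 + (if k \<notin> Y then F (insert k Z) else 0)"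
      proof (cases "k \<in> Y")
        case True
        then show ?thesis using Y0 by (simp add: trm_def)
      next
        case False
        have "trm \<psi> Y k = dd k * jw_sign 0 Z * jw_sign k Z * \<psi> (insert k Z)"
          using False Y0 fin unfolding trm_def Z_def by simp
        then have "cmod (trm \<psi> Y k) = cmod (dd k) * cmod (\<psi> (insert k Z))"
          by (simp only: norm_mult jw_norm mult_1_right)
        also have "\<dots> \<le> (cmod (dd k))\<^sup>2 + F (insert k Z)"
        proof -
          have "0 \<le> cmod (dd k) * cmod (\<psi> (insert k Z))" by simp
          then show ?thesis using sum_squares_bound[of "cmod (dd k)" "cmod (\<psi> (insert k Z))"] unfolding F_def by linarith
        qed
        finally show ?thesis using False by simp
      qed
    qed
    then show ?thesis by (simp add: summable_on_iff_abs_summable_on_complex)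
  qed
qed

lemma trm_summable: "\<psi> \<in> fock \<Longrightarrow> trm \<psi> Y summable_on A"
  by (rule summable_on_subset_banach[OF trm_summable_UNIV]) auto

definition G :: "int set \<Rightarrow> fop" where
  "G K \<psi> Y = infsum (trm \<psi> Y) K"

lemma finite_part:
  assumes psi: "\<psi> \<in> fock" and fF: "finite F'" and fW: "finite W"
  shows "(\<Sum>Y\<in>W. (cmod (sum (trm \<psi> Y) F'))\<^sup>2) \<le> (\<Sum>k\<in>F'. (cmod (dd k))\<^sup>2) * (\<Sum>\<^sub>\<infinity>X. (cmod (\<psi> X))\<^sup>2)"
proof -
  define W' where "W' = {Y\<in>W. finite Y}"
  define U where "U = insert 0 (F' \<union> \<Union> W')"
  have "finite W'" unfolding W'_def using fW by simp
  moreover have "\<And>M. M \<in> W' \<Longrightarrow> finite M" unfolding W'_def by simp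
  ultimately have "finite (\<Union> W')" by (rule finite_Union)
  then have fU: "finite U" unfolding U_def using fF by simp
  have W'U: "W' \<subseteq> Pow U" unfolding U_def by auto
  define K' where "K' = F' - {0}"
  have K'U: "K' \<subseteq> U - {0}" unfolding K'_def U_def by auto
  have sK: "sum (trm \<psi> Y) F' = sum (trm \<psi> Y) K'" for Y
    unfolding K'_def by (rule sum.mono_neutral_right) (use fF in auto)
  have "(\<Sum>Y\<in>W. (cmod (sum (trm \<psi> Y) F'))\<^sup>2) = (\<Sum>Y\<in>W'. (cmod (sum (trm \<psi> Y) F'))\<^sup>2)"
    unfolding W'_def by (rule sum.mono_neutral_right) (use fW in \<open>auto simp: trm_inf_fun\<close>)
  also have "\<dots> \<le> (\<Sum>Y\<in>Pow U. (cmod (sum (trm \<psi> Y) F'))\<^sup>2)"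
    by (rule sum_mono2) (use fU W'U in auto)
  also have "\<dots> = (\<Sum>Y\<in>Pow U. (cmod (\<Sum>k\<in>K'. trm \<psi> Y k))\<^sup>2)" by (simp only: sK)
  also have "\<dots> \<le> (\<Sum>k\<in>K'. (cmod (dd k))\<^sup>2) * (\<Sum>Y\<in>Pow U. (cmod (\<psi> Y))\<^sup>2)"
    by (rule finite_term_bound[OF fU _ K'U]) (simp add: U_def)
  also have "\<dots> \<le> (\<Sum>k\<in>F'. (cmod (dd k))\<^sup>2) * (\<Sum>\<^sub>\<infinity>X. (cmod (\<psi> X))\<^sup>2)"
  proof (rule mult_mono)
    show "(\<Sum>k\<in>K'. (cmod (dd k))\<^sup>2) \<le> (\<Sum>k\<in>F'. (cmod (dd k))\<^sup>2)"
      unfolding K'_def by (rule sum_mono2) (use fF in auto)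
    show "(\<Sum>Y\<in>Pow U. (cmod (\<psi> Y))\<^sup>2) \<le> (\<Sum>\<^sub>\<infinity>X. (cmod (\<psi> X))\<^sup>2)"
      by (rule fock_fin[OF psi]) (use fU in simp)
    show "0 \<le> (\<Sum>k\<in>F'. (cmod (dd k))\<^sup>2)" by (simp add: sum_nonneg)
    show "0 \<le> (\<Sum>Y\<in>Pow U. (cmod (\<psi> Y))\<^sup>2)" by (simp add: sum_nonneg)
  qed
  finally show ?thesis .
qed

lemma G_finite_bound:
  assumes psi: "\<psi> \<in> fock" and fW: "finite W"
  shows "(\<Sum>Y\<in>W. (cmod (G K \<psi> Y))\<^sup>2) \<le> infsum (\<lambda>k. (cmod (dd k))\<^sup>2) K * (\<Sum>\<^sub>\<infinity>X. (cmod (\<psi> X))\<^sup>2)"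
proof (rule tendsto_upperbound)
  have l: "((\<lambda>F'. sum (trm \<psi> Y) F') \<longlongrightarrow> G K \<psi> Y) (finite_subsets_at_top K)" for Y
    using has_sum_infsum[OF trm_summable[OF psi, of Y K]] unfolding has_sum_def G_def .
  show "((\<lambda>F'. \<Sum>Y\<in>W. (cmod (sum (trm \<psi> Y) F'))\<^sup>2) \<longlongrightarrow> (\<Sum>Y\<in>W. (cmod (G K \<psi> Y))\<^sup>2)) (finite_subsets_at_top K)"
    by (intro tendsto_intros l)
  have N0: "0 \<le> (\<Sum>\<^sub>\<infinity>X. (cmod (\<psi> X))\<^sup>2)" by (rule infsum_nonneg) simp
  show "\<forall>\<^sub>F F' in finite_subsets_at_top K. (\<Sum>Y\<in>W. (cmod (sum (trm \<psi> Y) F'))\<^sup>2) \<le> infsum (\<lambda>k. (cmod (dd k))\<^sup>2) K * (\<Sum>\<^sub>\<infinity>X. (cmod (\<psi> X))\<^sup>2)"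
  proof (rule eventually_finite_subsets_at_top_weakI)
    fix F' assume F': "finite F'" "F' \<subseteq> K"
    have "(\<Sum>Y\<in>W. (cmod (sum (trm \<psi> Y) F'))\<^sup>2) \<le> (\<Sum>k\<in>F'. (cmod (dd k))\<^sup>2) * (\<Sum>\<^sub>\<infinity>X. (cmod (\<psi> X))\<^sup>2)"
      by (rule finite_part[OF psi F'(1) fW])
    also have "\<dots> \<le> infsum (\<lambda>k. (cmod (dd k))\<^sup>2) K * (\<Sum>\<^sub>\<infinity>X. (cmod (\<psi> X))\<^sup>2)"
      by (rule mult_right_mono[OF finite_sum_le_infsum[OF dd_summable F'(1) F'(2)] N0]) simp
    finally show "(\<Sum>Y\<in>W. (cmod (sum (trm \<psi> Y) F'))\<^sup>2) \<le> infsum (\<lambda>k. (cmod (dd k))\<^sup>2) K * (\<Sum>\<^sub>\<infinity>X. (cmod (\<psi> X))\<^sup>2)" .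
  qed
  show "finite_subsets_at_top K \<noteq> bot" by simp
qed

lemma G_fock_norm:
  assumes psi: "\<psi> \<in> fock"
  shows "G K \<psi> \<in> fock" "fnorm (G K \<psi>) \<le> sqrt (infsum (\<lambda>k. (cmod (dd k))\<^sup>2) K) * fnorm \<psi>"
proof -
  define D where "D = infsum (\<lambda>k. (cmod (dd k))\<^sup>2) K"
  define N where "N = (\<Sum>\<^sub>\<infinity>X. (cmod (\<psi> X))\<^sup>2)"
  have s: "(\<lambda>Y. (cmod (G K \<psi> Y))\<^sup>2) summable_on UNIV"
    by (rule nonneg_bdd_above_summable_on) (auto intro!: bdd_aboveI G_finite_bound[OF psi])
  have le: "(\<Sum>\<^sub>\<infinity>Y. (cmod (G K \<psi> Y))\<^sup>2) \<le> D * N"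
    unfolding D_def N_def by (rule infsum_le_finite_sums[OF s]) (rule G_finite_bound[OF psi])
  show "G K \<psi> \<in> fock" unfolding fock_def using s by (auto simp: G_def trm_inf_fun)
  have "fnorm (G K \<psi>) \<le> sqrt (D * N)" unfolding fnorm_def using le by simp
  also have "\<dots> = sqrt D * fnorm \<psi>" unfolding fnorm_def N_def by (simp add: real_sqrt_mult)
  finally show "fnorm (G K \<psi>) \<le> sqrt (infsum (\<lambda>k. (cmod (dd k))\<^sup>2) K) * fnorm \<psi>" unfolding D_def .
qed

lemma zero_fock: "(\<lambda>_. 0) \<in> fock" unfolding fock_def by simp

lemma opnorm_le:
  assumes "\<And>\<psi>. \<psi> \<in> fock \<Longrightarrow> fnorm \<psi> \<le> 1 \<Longrightarrow> fnorm (T \<psi>) \<le> C"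
  shows "opnorm T \<le> C"
  unfolding opnorm_def
proof (rule cSup_least)
  show "{fnorm (T \<psi>) |\<psi>. \<psi> \<in> fock \<and> fnorm \<psi> \<le> 1} \<noteq> {}"
    using zero_fock by (auto simp: fnorm_def)
  show "\<And>x. x \<in> {fnorm (T \<psi>) |\<psi>. \<psi> \<in> fock \<and> fnorm \<psi> \<le> 1} \<Longrightarrow> x \<le> C" using assms by auto
qed



lemma coef_neg: "coef (-d) = - coef d"
  unfolding coef_def by simp

lemma trm_cre_ann:
  assumes k0: "k \<noteq> 0"
  shows "trm \<psi> Y k = dd k * (cre 0 (ann k \<psi>) Y - cre k (ann 0 \<psi>) Y)"
proof (cases "finite Y")
  case False
  then show ?thesis by (simp add: trm_def cre_def)
next
  case fin: True
  show ?thesis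
  proof (cases "0 \<in> Y")
    case Y0: True
    show ?thesis
    proof (cases "k \<in> Y")
      case True
      then show ?thesis using fin Y0 k0 by (simp add: trm_def cre_def ann_def)
    next
      case False
      then show ?thesis using fin Y0 k0 by (simp add: trm_def cre_def ann_def mult.assoc)
    qed
  next
    case Y0: False
    show ?thesis
    proof (cases "k \<in> Y")
      case True
      then show ?thesis using fin Y0 k0 by (simp add: trm_def cre_def ann_def mult.assoc)
    next
      case False
      then show ?thesis using fin Y0 k0 by (simp add: trm_def cre_def ann_def)
    qed
  qed
qed

lemma Psi_pair:
  assumes k0: "k \<noteq> 0"
  shows "Psi {0, k} \<psi> Y = trm \<psi> Y k"
proof (cases "even k")
  case ev: True
  then obtain m where m: "k = 2 * m" by (auto elim!: evenE)
  show ?thesis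
  proof (cases "k > 0")
    case True
    then have m1: "m \<ge> 1" using m by simp
    have c: "\<exists>n l. l \<ge> 1 \<and> {0, k} = {n, n + 2 * l}" using m m1 by (intro exI[of _ 0] exI[of _ m]) auto
    have mn: "Min {0, k} = 0" "Max {0, k} = k" using True by auto
    have "Psi {0, k} \<psi> Y = coef k * (cre 0 (ann k \<psi>) Y - cre k (ann 0 \<psi>) Y)"
      unfolding Psi_def using c mn by (simp add: Let_def)
    then show ?thesis using trm_cre_ann[OF k0] ev by (simp add: dd_def)
  next
    case False
    then have kn: "k < 0" using k0 by simp
    then have m1: "-m \<ge> 1" using m by simp
    have c: "\<exists>n l. l \<ge> 1 \<and> {0, k} = {n, n + 2 * l}" using m m1 by (intro exI[of _ k] exI[of _ "-m"]) auto
    have mn: "Min {0, k} = k" "Max {0, k} = 0" using kn by auto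
    have "Psi {0, k} \<psi> Y = coef (- k) * (cre k (ann 0 \<psi>) Y - cre 0 (ann k \<psi>) Y)"
      unfolding Psi_def using c mn by (simp add: Let_def)
    also have "\<dots> = coef k * (cre 0 (ann k \<psi>) Y - cre k (ann 0 \<psi>) Y)"
      by (simp add: coef_neg algebra_simps)
    finally show ?thesis using trm_cre_ann[OF k0] ev by (simp add: dd_def)
  qed
next
  case odd: False
  have nc: "\<not> (\<exists>n l. l \<ge> 1 \<and> {0, k} = {n, n + 2 * l})"
  proof
    assume "\<exists>n l. l \<ge> 1 \<and> {0, k} = {n, n + 2 * l}"
    then obtain n l where l: "l \<ge> 1" "{0, k} = {n, n + 2 * l}" by blast
    then have "(n = 0 \<and> k = n + 2 * l) \<or> (n + 2 * l = 0 \<and> k = n)" using k0 by (auto simp: doubleton_eq_iff)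
    then have "k = 2 * l \<or> k = 2 * (-l)" by auto
    then have "even k" by auto
    then show False using odd by simp
  qed
  have c: "(\<exists>n l. l \<ge> 1 \<and> {0, k} = {n, n + 2 * l}) = False" using nc by simp
  have "Psi {0, k} \<psi> Y = 0" unfolding Psi_def c by simp
  moreover have "dd k = 0" using odd by (simp add: dd_def)
  ultimately show ?thesis using trm_cre_ann[OF k0] by simp
qed

lemma Psi_zero:
  assumes "0 \<in> X" "\<not> (\<exists>k. k \<noteq> 0 \<and> X = {0, k})"
  shows "Psi X \<psi> Y = 0"
proof -
  have "\<not> (\<exists>n l. l \<ge> (1::int) \<and> X = {n, n + 2 * l})"
  proof
    assume "\<exists>n l. l \<ge> (1::int) \<and> X = {n, n + 2 * l}"
    then obtain n l where l: "l \<ge> (1::int)" "X = {n, n + 2 * l}" by blast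
    then have "n = 0 \<or> n + 2 * l = 0" using assms(1) by auto
    then show False
    proof
      assume "n = 0" then show False using assms(2) l by (metis add_0 mult_eq_0_iff not_one_le_zero zero_neq_numeral)
    next
      assume "n + 2 * l = 0" then have "X = {0, n}" "n \<noteq> 0" using l by auto
      then show False using assms(2) by blast
    qed
  qed
  then have c: "(\<exists>n l. l \<ge> (1::int) \<and> X = {n, n + 2 * l}) = False" by simp
  show ?thesis unfolding Psi_def c by simp
qed

lemma sum_Psi:
  assumes fF: "finite F" and FS: "F \<subseteq> {X. finite X \<and> (0::int) \<in> X}"
  defines "KF \<equiv> {k. k \<noteq> 0 \<and> {0, k} \<in> F}"
  shows "finite KF" "(\<Sum>X\<in>F. Psi X \<psi> Y) = (\<Sum>k\<in>KF. trm \<psi> Y k)"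
proof -
  have "KF \<subseteq> \<Union> F" unfolding KF_def by auto
  moreover have "finite (\<Union> F)" using fF FS by (intro finite_Union) auto
  ultimately show fK: "finite KF" by (rule finite_subset)
  have inj: "inj_on (\<lambda>k. {0, k}) KF"
  proof (rule inj_onI)
    fix k j assume "k \<in> KF" "j \<in> KF" "{0, k} = {0::int, j}"
    then show "k = j" unfolding KF_def by (auto simp: doubleton_eq_iff)
  qed
  have sub: "(\<lambda>k. {0, k}) ` KF \<subseteq> F" unfolding KF_def by auto
  have "(\<Sum>X\<in>F. Psi X \<psi> Y) = (\<Sum>X\<in>(\<lambda>k. {0, k}) ` KF. Psi X \<psi> Y)"
  proof (rule sum.mono_neutral_right[OF fF sub])
    show "\<forall>X\<in>F - (\<lambda>k. {0, k}) ` KF. Psi X \<psi> Y = 0"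
    proof
      fix X assume X: "X \<in> F - (\<lambda>k. {0, k}) ` KF"
      have "0 \<in> X" using X FS by auto
      moreover have "\<not> (\<exists>k. k \<noteq> 0 \<and> X = {0, k})" using X unfolding KF_def by auto
      ultimately show "Psi X \<psi> Y = 0" by (rule Psi_zero)
    qed
  qed
  also have "\<dots> = (\<Sum>k\<in>KF. Psi {0, k} \<psi> Y)" using sum.reindex[OF inj] by simp
  also have "\<dots> = (\<Sum>k\<in>KF. trm \<psi> Y k)" by (rule sum.cong) (auto simp: KF_def Psi_pair)
  finally show "(\<Sum>X\<in>F. Psi X \<psi> Y) = (\<Sum>k\<in>KF. trm \<psi> Y k)" .
qed



lemma fnorm_neg: "fnorm (\<lambda>Y. - f Y) = fnorm f"
  unfolding fnorm_def by simp

lemma G_split: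
  assumes psi: "\<psi> \<in> fock"
  shows "G UNIV \<psi> Y = G K \<psi> Y + G (- K) \<psi> Y"
proof -
  have "G UNIV \<psi> Y = infsum (trm \<psi> Y) (K \<union> - K)" unfolding G_def by simp
  also have "\<dots> = G K \<psi> Y + G (- K) \<psi> Y"
    unfolding G_def by (rule infsum_Un_disjoint) (auto intro: trm_summable[OF psi])
  finally show ?thesis .
qed

theorem mainTheorem8:
  shows "\<exists>S. bounded_op S \<and>
    (\<forall>\<epsilon>>0. \<exists>F0. finite F0 \<and> F0 \<subseteq> {X. finite X \<and> (0::int) \<in> X} \<and>
       (\<forall>F. finite F \<and> F0 \<subseteq> F \<and> F \<subseteq> {X. finite X \<and> (0::int) \<in> X} \<longrightarrow>
          opnorm (\<lambda>\<psi> Y. (\<Sum>X\<in>F. Psi X \<psi> Y) - S \<psi> Y) < \<epsilon>)) \<and>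
    opnorm S \<le> 2 * sqrt (1 - 4 / pi\<^sup>2)"
proof (intro exI[of _ "G UNIV"] conjI allI impI)
  define D where "D A = infsum (\<lambda>k. (cmod (dd k))\<^sup>2) A" for A
  have D0: "D A \<ge> 0" for A unfolding D_def by (rule infsum_nonneg) simp
  show "bounded_op (G UNIV)"
    unfolding bounded_op_def using G_fock_norm by blast
  show "opnorm (G UNIV) \<le> 2 * sqrt (1 - 4 / pi\<^sup>2)"
  proof (rule opnorm_le)
    fix \<psi> assume psi: "\<psi> \<in> fock" and n1: "fnorm \<psi> \<le> 1"
    have "fnorm (G UNIV \<psi>) \<le> sqrt (D UNIV) * fnorm \<psi>" using G_fock_norm(2)[OF psi] unfolding D_def .
    also have "\<dots> \<le> sqrt (D UNIV)" using n1 D0[of UNIV] by (simp add: mult_left_le)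
    also have "\<dots> \<le> sqrt (4 * (1 - 4 / pi\<^sup>2))" using dd_total unfolding D_def by simp
    also have "\<dots> = sqrt 4 * sqrt (1 - 4 / pi\<^sup>2)" by (rule real_sqrt_mult)
    also have "\<dots> = 2 * sqrt (1 - 4 / pi\<^sup>2)" by simp
    finally show "fnorm (G UNIV \<psi>) \<le> 2 * sqrt (1 - 4 / pi\<^sup>2)" .
  qed
  fix \<epsilon> :: real assume e: "\<epsilon> > 0"
  have lim: "((\<lambda>A. \<Sum>k\<in>A. (cmod (dd k))\<^sup>2) \<longlongrightarrow> D UNIV) (finite_subsets_at_top UNIV)"
    using has_sum_infsum[OF dd_summable] unfolding has_sum_def D_def .
  have e2: "\<epsilon>\<^sup>2 > 0" using e by simp
  have "\<forall>\<^sub>F A in finite_subsets_at_top UNIV. dist (\<Sum>k\<in>A. (cmod (dd k))\<^sup>2) (D UNIV) < \<epsilon>\<^sup>2"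
    using tendsto_iff[THEN iffD1, OF lim, rule_format, OF e2] .
  then have "\<exists>X. finite X \<and> X \<subseteq> UNIV \<and> (\<forall>A. finite A \<and> X \<subseteq> A \<and> A \<subseteq> UNIV \<longrightarrow> dist (\<Sum>k\<in>A. (cmod (dd k))\<^sup>2) (D UNIV) < \<epsilon>\<^sup>2)"
    by (simp only: eventually_finite_subsets_at_top)
  then obtain X0 where X0f: "finite X0" and X0a: "\<forall>A. finite A \<and> X0 \<subseteq> A \<and> A \<subseteq> UNIV \<longrightarrow> dist (\<Sum>k\<in>A. (cmod (dd k))\<^sup>2) (D UNIV) < \<epsilon>\<^sup>2"
    by blast
  have X0: "finite X0" "\<And>A. finite A \<Longrightarrow> X0 \<subseteq> A \<Longrightarrow> dist (\<Sum>k\<in>A. (cmod (dd k))\<^sup>2) (D UNIV) < \<epsilon>\<^sup>2"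
    using X0f X0a by auto
  define F0 where "F0 = (\<lambda>k. {0::int, k}) ` (X0 - {0})"
  show "\<exists>F0. finite F0 \<and> F0 \<subseteq> {X. finite X \<and> (0::int) \<in> X} \<and>
       (\<forall>F. finite F \<and> F0 \<subseteq> F \<and> F \<subseteq> {X. finite X \<and> (0::int) \<in> X} \<longrightarrow>
          opnorm (\<lambda>\<psi> Y. (\<Sum>X\<in>F. Psi X \<psi> Y) - G UNIV \<psi> Y) < \<epsilon>)"
  proof (intro exI[of _ F0] conjI allI impI)
    show "finite F0" unfolding F0_def using X0(1) by simp
    show "F0 \<subseteq> {X. finite X \<and> (0::int) \<in> X}" unfolding F0_def by auto
    fix F assume F: "finite F \<and> F0 \<subseteq> F \<and> F \<subseteq> {X. finite X \<and> (0::int) \<in> X}"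
    define KF where "KF = {k. k \<noteq> 0 \<and> {0, k} \<in> F}"
    have fK: "finite KF" and sF: "\<And>\<psi> Y. (\<Sum>X\<in>F. Psi X \<psi> Y) = (\<Sum>k\<in>KF. trm \<psi> Y k)"
      using sum_Psi[of F] F unfolding KF_def by auto
    have X0K: "X0 \<subseteq> insert 0 KF" using F unfolding F0_def KF_def by auto
    have "dist (\<Sum>k\<in>insert 0 KF. (cmod (dd k))\<^sup>2) (D UNIV) < \<epsilon>\<^sup>2" using X0(2)[OF _ X0K] fK by simp
    moreover have "(\<Sum>k\<in>insert 0 KF. (cmod (dd k))\<^sup>2) = D KF"
      unfolding D_def using fK by (simp add: sum.insert_if)
    moreover have "D UNIV = D KF + D (- KF)"
    proof -
      have "D UNIV = D (KF \<union> - KF)" by simp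
      also have "\<dots> = D KF + D (- KF)" unfolding D_def by (rule infsum_Un_disjoint) (auto intro: dd_summable)
      finally show ?thesis .
    qed
    ultimately have Dlt: "D (- KF) < \<epsilon>\<^sup>2" by (simp add: dist_real_def)
    have "opnorm (\<lambda>\<psi> Y. (\<Sum>X\<in>F. Psi X \<psi> Y) - G UNIV \<psi> Y) \<le> sqrt (D (- KF))"
    proof (rule opnorm_le)
      fix \<psi> assume psi: "\<psi> \<in> fock" and n1: "fnorm \<psi> \<le> 1"
      have "(\<lambda>Y. (\<Sum>X\<in>F. Psi X \<psi> Y) - G UNIV \<psi> Y) = (\<lambda>Y. - G (- KF) \<psi> Y)"
      proof
        fix Y
        have "(\<Sum>X\<in>F. Psi X \<psi> Y) = G KF \<psi> Y" unfolding sF G_def using fK by simp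
        then show "(\<Sum>X\<in>F. Psi X \<psi> Y) - G UNIV \<psi> Y = - G (- KF) \<psi> Y"
          using G_split[OF psi, of Y KF] by simp
      qed
      then have "fnorm (\<lambda>Y. (\<Sum>X\<in>F. Psi X \<psi> Y) - G UNIV \<psi> Y) = fnorm (G (- KF) \<psi>)"
        by (simp add: fnorm_neg)
      also have "\<dots> \<le> sqrt (D (- KF)) * fnorm \<psi>" using G_fock_norm(2)[OF psi] unfolding D_def .
      also have "\<dots> \<le> sqrt (D (- KF))" using n1 D0[of "- KF"] by (simp add: mult_left_le)
      finally show "fnorm (\<lambda>Y. (\<Sum>X\<in>F. Psi X \<psi> Y) - G UNIV \<psi> Y) \<le> sqrt (D (- KF))" .
    qed
    also have "\<dots> < sqrt (\<epsilon>\<^sup>2)" by (rule real_sqrt_less_mono[OF Dlt])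
    also have "\<dots> = \<epsilon>" using e by simp
    finally show "opnorm (\<lambda>\<psi> Y. (\<Sum>X\<in>F. Psi X \<psi> Y) - G UNIV \<psi> Y) < \<epsilon>" .
  qed
qed


end
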